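(* For any finite alphabet $\mathfrak{G}$, the pair of graded graphs $(\mathbf{S}_\bullet(\mathfrak{G}), \mathbf{U}, \mathbf{V})$ is $\phi$-diagonal dual, i.e. $\mathbf{V}^\star \mathbf{U} - \mathbf{U} \mathbf{V}^\star = \phi$, for the linear map $\phi : \mathbb{K}\langle\mathbf{S}_\bullet(\mathfrak{G})\rangle \to \mathbb{K}\langle\mathbf{S}_\bullet(\mathfrak{G})\rangle$ satisfying $\phi(\mathfrak{t}) = (\#\mathfrak{G})\, \mathrm{nf}(\mathfrak{t})\, \mathfrak{t}$ for any $\mathfrak{G}$-tree $\mathfrak{t}$.
   Context: $\mathfrak{G}$ is a finite alphabet: a finite set of letters, each letter $\mathtt{a}$ having an arity $|\mathtt{a}|\geq 1$. A $\mathfrak{G}$-tree is either the leaf (the unique tree with no internal node) or $\mathtt{a}[\mathfrak{s}_1,\dots,\mathfrak{s}_{|\mathtt{a}|}]$, a root decorated by $\mathtt{a}\in\mathfrak{G}$ whose children are the $\mathfrak{G}$-trees $\mathfrak{s}_1,\dots,\mathfrak{s}_{|\mathtt{a}|}$. The degree $\deg(\mathfrak{t})$ is the number of internal nodes, the arity $|\mathfrak{t}|$ the number of leaves (ordered from left to right). $\mathbf{S}_\bullet(\mathfrak{G})$ is the set of $\mathfrak{G}$-trees graded by degree. Nodes are addressed by words of positive integers: the root is $\epsilon$ and the $i$-th child of $u$ is $ui$. For $i\in[|\mathfrak{t}|]$, $\mathfrak{t}\circ_i \mathtt{a}$ is obtained by replacing the $i$-th leaf of $\mathfrak{t}$ by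 an internal node decorated by $\mathtt{a}$ with $|\mathtt{a}|$ leaves as children. The linear map $\mathbf{U}$ is defined by $\mathbf{U}(\mathfrak{t}) = \sum_{\mathtt{a}\in\mathfrak{G},\, i\in[|\mathfrak{t}|]} \mathfrak{t}\circ_i \mathtt{a}$. The linear map $\mathbf{V}$ is the adjoint (for the scalar product making $\mathfrak{G}$-trees orthonormal) of the map $\mathbf{V}^\star$ defined recursively by: $\mathbf{V}^\star$ of the leaf is $0$; $\mathbf{V}^\star(\mathtt{a}[\mathfrak{s}, \text{leaf}, \dots, \text{leaf}]) = \mathfrak{s}$; and $\mathbf{V}^\star(\mathtt{a}[\mathfrak{s}_1,\dots,\mathfrak{s}_{|\mathtt{a}|}]) = \sum_{j\in[2,|\mathtt{a}|]} \mathtt{a}[\mathfrak{s}_1,\dots,\mathfrak{s}_{j-1},\mathbf{V}^\star(\mathfrak{s}_j),\mathfrak{s}_{j+1},\dots,\mathfrak{s}_{|\mathtt{a}|}]$ when some $\mathfrak{s}_j$ with $j\geq 2$ is not the leaf. A leaf of $\mathfrak{t}$ is non-first if its address word contains no letter $1$, and $\mathrm{nf}(\mathfrak{t})$ is the number of non-first leaves of $\mathfrak{t}$ (so $\mathrm{nf}$ of the leaf is $1$). *)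

theory Defs
  imports "HOL-Library.Multiset"
begin

text \<open>Planar rooted trees whose internal nodes are decorated by letters.
  The alphabet is a finite set G of letters together with an arity function ar.\<close>

datatype 'a tree = Leaf | Node 'a "'a tree list"

fun gtree :: "'a set \<Rightarrow> ('a \<Rightarrow> nat) \<Rightarrow> 'a tree \<Rightarrow> bool" where
  "gtree G ar Leaf = True"
| "gtree G ar (Node a ts) = (a \<in> G \<and> length ts = ar a \<and> (\<forall>t\<in>set ts. gtree G ar t))"

text \<open>Arity of a tree = number of leaves.\<close>
fun leaves :: "'a tree \<Rightarrow> nat" where
  "leaves Leaf = 1"
| "leaves (Node a ts) = sum_list (map leaves ts)"

text \<open>Number of non-first leaves: leaves whose address contains no letter 1.\<close>
fun nf :: "'a tree \<Rightarrow> nat" where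
  "nf Leaf = 1"
| "nf (Node a []) = 0"
| "nf (Node a (t # ts)) = sum_list (map nf ts)"

text \<open>graft ar t i a = t \<circ>_(i+1) a : replace the leaf with 0-based index i (from the left)
  by a node labelled a with ar a leaves.\<close>
fun graft :: "('a \<Rightarrow> nat) \<Rightarrow> 'a tree \<Rightarrow> nat \<Rightarrow> 'a \<Rightarrow> 'a tree"
and graft_list :: "('a \<Rightarrow> nat) \<Rightarrow> 'a tree list \<Rightarrow> nat \<Rightarrow> 'a \<Rightarrow> 'a tree list" where
  "graft ar Leaf i a = (if i = 0 then Node a (replicate (ar a) Leaf) else Leaf)"
| "graft ar (Node b ts) i a = Node b (graft_list ar ts i a)"
| "graft_list ar [] i a = []"
| "graft_list ar (t # ts) i a =
     (if i < leaves t then graft ar t i a # ts else t # graft_list ar ts (i - leaves t) a)"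

text \<open>The map U on a basis tree, as a multiset of trees (coefficients are multiplicities).\<close>
definition U_tree :: "'a set \<Rightarrow> ('a \<Rightarrow> nat) \<Rightarrow> 'a tree \<Rightarrow> 'a tree multiset" where
  "U_tree G ar t = (\<Sum>a\<in>G. \<Sum>i<leaves t. {# graft ar t i a #})"

text \<open>The map V-star on a basis tree. Children positions 2..|a| are the 0-based list
  indices 1..<length ts.\<close>
function Vstar_tree :: "'a tree \<Rightarrow> 'a tree multiset" where
  "Vstar_tree Leaf = {#}"
| "Vstar_tree (Node a ts) =
     (if ts = [] then {#}
      else if (\<forall>s\<in>set (tl ts). s = Leaf) then {# hd ts #}
      else (\<Sum>j\<in>{1..<length ts}. image_mset (\<lambda>s'. Node a (ts[j := s'])) (Vstar_tree (ts ! j))))"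
  by pat_completeness auto
termination
  by (relation "measure size") (auto intro: size_list_estimation' nth_mem simp: less_Suc_eq_le)

text \<open>Vectors of the free K-module on trees: coefficient functions (of finite support).
  Linear extension of a map given on basis trees by a multiset of trees.\<close>
definition lin :: "('a tree \<Rightarrow> 'a tree multiset) \<Rightarrow> ('a tree \<Rightarrow> 'k::comm_ring_1) \<Rightarrow> ('a tree \<Rightarrow> 'k)" where
  "lin f v = (\<lambda>s. \<Sum>t\<in>{t. v t \<noteq> 0}. v t * of_nat (count (f t) s))"

definition phi_tree :: "'a set \<Rightarrow> 'a tree \<Rightarrow> 'a tree multiset" where
  "phi_tree G t = replicate_mset (card G * nf t) t"

end

theory Submission
  imports Defs
begin

lemma sum_lessThan_add_split:
  "(\<Sum>i<m+n. f i) = (\<Sum>i<m. f i) + (\<Sum>i<n. f (m+i)) " for f :: "nat \<Rightarrow> 'b::comm_monoid_add"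
  by (induction n) (simp_all add: ac_simps)

lemma mb_sum_swap:
  "(\<Sum>x\<in>#M. \<Sum>j\<in>J. f x j) = (\<Sum>j\<in>J. \<Sum>x\<in>#M. f x j)" for f :: "_ \<Rightarrow> _ \<Rightarrow> 'b::comm_monoid_add"
  by (induction M) (simp_all add: sum.distrib)

lemma mb_of_sum:
  "(\<Sum>x\<in>#(\<Sum>j\<in>J. M j). f x) = (\<Sum>j\<in>J. \<Sum>x\<in>#M j. f x)" for f :: "_ \<Rightarrow> 'b::comm_monoid_add"
  by (induction J rule: infinite_finite_induct) simp_all

lemma image_mset_of_sum:
  "image_mset h (\<Sum>j\<in>J. M j) = (\<Sum>j\<in>J. image_mset h (M j))"
  by (induction J rule: infinite_finite_induct) simp_all

lemma image_mset_of_mb: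
  "image_mset h (\<Sum>x\<in>#M. f x) = (\<Sum>x\<in>#M. image_mset h (f x))"
  by (induction M) simp_all

lemma mb_single: "(\<Sum>x\<in>#M. {#h x#}) = image_mset h M"
  by (induction M) simp_all

lemma graft_list_length: "length (graft_list ar ts i b) = length ts"
  by (induction ts arbitrary: i) auto

lemma GL:
  "(\<Sum>i<sum_list (map leaves ts). {#graft_list ar ts i b#})
   = (\<Sum>k<length ts. \<Sum>i<leaves (ts!k). {#ts[k:=graft ar (ts!k) i b]#})"
proof (induction ts)
  case Nil
  then show ?case by simp
next
  case (Cons t ts)
  have "(\<Sum>i<sum_list (map leaves (t#ts)). {#graft_list ar (t#ts) i b#})
     = (\<Sum>i<leaves t. {#graft_list ar (t#ts) i b#}) + (\<Sum>i<sum_list (map leaves ts). {#graft_list ar (t#ts) (leaves t + i) b#})"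
    by (simp add: sum_lessThan_add_split)
  also have "\<dots> = (\<Sum>i<leaves t. {#graft ar t i b # ts#}) + (\<Sum>i<sum_list (map leaves ts). {#t # graft_list ar ts i b#})"
    by simp
  also have "(\<Sum>i<sum_list (map leaves ts). {#t # graft_list ar ts i b#})
      = image_mset (Cons t) (\<Sum>i<sum_list (map leaves ts). {#graft_list ar ts i b#})"
    by (simp add: image_mset_of_sum)
  also have "\<dots> = (\<Sum>k<length ts. \<Sum>i<leaves (ts!k). {#(t#ts)[Suc k:=graft ar ((t#ts)!Suc k) i b]#})"
    by (simp add: Cons.IH image_mset_of_sum)
  finally have L: "(\<Sum>i<sum_list (map leaves (t#ts)). {#graft_list ar (t#ts) i b#}) = (\<Sum>i<leaves t. {#graft ar t i b # ts#}) + (\<Sum>k<length ts. \<Sum>i<leaves (ts!k). {#(t#ts)[Suc k:=graft ar ((t#ts)!Suc k) i b]#})" .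
  have R: "(\<Sum>k<length (t#ts). \<Sum>i<leaves ((t#ts)!k). {#(t#ts)[k:=graft ar ((t#ts)!k) i b]#})
     = (\<Sum>i<leaves t. {#graft ar t i b # ts#}) + (\<Sum>k<length ts. \<Sum>i<leaves (ts!k). {#(t#ts)[Suc k:=graft ar ((t#ts)!Suc k) i b]#})"
    by (simp only: length_Cons sum.lessThan_Suc_shift) simp
  show ?case using L R by simp
qed

definition PU :: "'a set \<Rightarrow> ('a \<Rightarrow> nat) \<Rightarrow> 'a tree list \<Rightarrow> 'a tree list multiset" where
  "PU G ar ts = (\<Sum>k<length ts. \<Sum>g\<in>#U_tree G ar (ts!k). {#ts[k:=g]#})"

lemma U_node: "U_tree G ar (Node a ts) = image_mset (Node a) (PU G ar ts)"
proof -
  have "U_tree G ar (Node a ts) = (\<Sum>b\<in>G. image_mset (Node a) (\<Sum>i<sum_list (map leaves ts). {#graft_list ar ts i b#}))"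
    by (simp add: U_tree_def image_mset_of_sum)
  also have "\<dots> = image_mset (Node a) (\<Sum>b\<in>G. \<Sum>k<length ts. \<Sum>i<leaves (ts!k). {#ts[k:=graft ar (ts!k) i b]#})"
    by (simp add: GL image_mset_of_sum)
  also have "(\<Sum>b\<in>G. \<Sum>k<length ts. \<Sum>i<leaves (ts!k). {#ts[k:=graft ar (ts!k) i b]#}) = PU G ar ts"
    unfolding PU_def
  proof (subst sum.swap, rule sum.cong)
    fix k
    show "(\<Sum>b\<in>G. \<Sum>i<leaves (ts!k). {#ts[k:=graft ar (ts!k) i b]#}) = (\<Sum>g\<in>#U_tree G ar (ts!k). {#ts[k:=g]#})"
      unfolding mb_single U_tree_def by (simp add: image_mset_of_sum)
  qed simp
  finally show ?thesis .
qed

lemma U_Leaf: "U_tree G ar Leaf = (\<Sum>b\<in>G. {#Node b (replicate (ar b) Leaf)#})"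
  by (simp add: U_tree_def)

lemma U_nonleaf: "x \<in># U_tree G ar s \<Longrightarrow> x \<noteq> Leaf"
  by (cases "finite G"; cases s) (auto simp: U_node U_Leaf U_tree_def set_mset_sum)


definition PV :: "'a tree list \<Rightarrow> 'a tree list multiset" where
  "PV ts = (\<Sum>j\<in>{1..<length ts}. \<Sum>s\<in>#Vstar_tree (ts!j). {#ts[j:=s]#})"

lemma V_nodeB:
  assumes "ts \<noteq> []" "\<exists>s\<in>set (tl ts). s \<noteq> Leaf"
  shows "Vstar_tree (Node a ts) = image_mset (Node a) (PV ts)"
  using assms unfolding PV_def mb_single by (auto simp: image_mset_of_sum image_mset.compositionality o_def)

lemma replicate_mset_plus: "replicate_mset (m+n) x = replicate_mset m x + replicate_mset n x"
  by (induction m) simp_all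

lemma rep_sum: "(\<Sum>i\<in>A. replicate_mset (f i) x) = replicate_mset (\<Sum>i\<in>A. f i) x"
  by (induction A rule: infinite_finite_induct) (simp_all add: replicate_mset_plus)

lemma single_sum: "(\<Sum>i\<in>A. {#x#}) = replicate_mset (card A) x"
  using rep_sum[where f="\<lambda>_. 1" and A=A and x=x] by (cases "finite A") simp_all

lemma V_corolla: "m \<ge> 1 \<Longrightarrow> Vstar_tree (Node b (replicate m Leaf)) = {#Leaf#}"
  by (cases m) auto

lemma mb_image: "(\<Sum>x\<in>#image_mset h M. f x) = (\<Sum>x\<in>#M. f (h x))"
  by (simp add: image_mset.compositionality o_def)

lemma nf_node: "ts \<noteq> [] \<Longrightarrow> nf (Node a ts) = (\<Sum>j\<in>{1..<length ts}. nf (ts!j))"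
proof -
  assume "ts \<noteq> []"
  then obtain t0 rest where ts: "ts = t0 # rest" by (cases ts) auto
  have "nf (Node a ts) = (\<Sum>j<length rest. nf (rest!j))"
    by (simp add: ts sum_list_sum_nth atLeast0LessThan)
  also have "\<dots> = (\<Sum>j\<in>{1..<length ts}. nf (ts!j))"
    unfolding ts length_Cons One_nat_def sum.shift_bounds_Suc_ivl by (simp add: atLeast0LessThan)
  finally show ?thesis .
qed

lemma main:
  assumes fin: "finite G" and ar: "\<forall>b\<in>G. ar b \<ge> 1"
  shows "(\<Sum>x\<in>#U_tree G ar t. Vstar_tree x) = (\<Sum>x\<in>#Vstar_tree t. U_tree G ar x) + replicate_mset (card G * nf t) t"
proof (induction t)
  case Leaf
  have "(\<Sum>x\<in>#U_tree G ar Leaf. Vstar_tree x) = (\<Sum>b\<in>G. {#Leaf#})"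
    unfolding U_Leaf mb_of_sum using ar by (intro sum.cong) (auto simp: V_corolla)
  then show ?case by (simp add: single_sum)
next
  case (Node a ts)
  let ?U = "U_tree G ar" and ?V = "Vstar_tree"
  show ?case
  proof (cases "ts = []")
    case True then show ?thesis by (simp add: U_node PU_def)
  next
    case ne: False
    let ?n = "length ts"
    have LHS0: "(\<Sum>x\<in>#?U (Node a ts). ?V x) = (\<Sum>k<?n. \<Sum>g\<in>#?U (ts!k). ?V (Node a (ts[k:=g])))"
      unfolding U_node PU_def mb_image mb_of_sum mb_single ..
    show ?thesis
    proof (cases "\<forall>s\<in>set (tl ts). s = Leaf")
      case True
      obtain t0 m where ts: "ts = t0 # replicate m Leaf"
        using ne True by (cases ts) (auto intro!: replicate_eqI)
      have V: "?V (Node a ts) = {#t0#}" by (simp add: ts)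
      have nf: "nf (Node a ts) = m" by (simp add: ts sum_list_replicate)
      have k0: "(\<Sum>g\<in>#?U (ts!0). ?V (Node a (ts[0:=g]))) = ?U t0"
        by (simp add: ts mb_single)
      have ks: "?V (Node a (t0 # (replicate m Leaf)[i:=Node b (replicate (ar b) Leaf)])) = {#Node a ts#}"
        if i: "i < m" and b: "b \<in> G" for i b
      proof -
        let ?C = "Node b (replicate (ar b) Leaf)"
        let ?ts' = "t0 # (replicate m Leaf)[i:=?C]"
        have "?V (Node a ?ts') = image_mset (Node a) (PV ?ts')"
          using i by (intro V_nodeB) (auto intro!: bexI[OF _ set_update_memI])
        also have "PV ?ts' = (\<Sum>j\<in>{1..<Suc m}. if j = Suc i then {#ts#} else {#})"
          unfolding PV_def
        proof (intro sum.cong)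
          fix j assume j: "j \<in> {1..<Suc m}"
          show "(\<Sum>s\<in>#?V (?ts'!j). {#?ts'[j:=s]#}) = (if j = Suc i then {#ts#} else {#})"
          proof (cases "j = Suc i")
            case True
            have "?V ?C = {#Leaf#}" using ar b by (simp add: V_corolla Suc_le_eq)
            then show ?thesis using True i by (simp add: ts list_update_same_conv del: Vstar_tree.simps)
          next
            case False
            then obtain j' where j': "j = Suc j'" "j' \<noteq> i" "j' < m" using j by (cases j) auto
            then show ?thesis by simp
          qed
        qed simp
        also have "\<dots> = {#ts#}" using i by simp
        finally show ?thesis by simp
      qed
      have "(\<Sum>x\<in>#?U (Node a ts). ?V x) = ?U t0 + (\<Sum>i<m. \<Sum>g\<in>#?U Leaf. ?V (Node a (ts[Suc i:=g])))"
        unfolding LHS0 using k0 by (simp add: ts sum.lessThan_Suc_shift del: sum.lessThan_Suc Vstar_tree.simps)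
      also have "(\<Sum>i<m. \<Sum>g\<in>#?U Leaf. ?V (Node a (ts[Suc i:=g]))) = (\<Sum>i<m. replicate_mset (card G) (Node a ts))"
        unfolding U_Leaf mb_of_sum
      proof (intro sum.cong refl)
        fix i assume "i \<in> {..<m}"
        then have "(\<Sum>b\<in>G. \<Sum>g\<in>#{#Node b (replicate (ar b) Leaf)#}. ?V (Node a (ts[Suc i:=g]))) = (\<Sum>b\<in>G. {#Node a ts#})"
          by (intro sum.cong refl) (simp add: ks ts del: Vstar_tree.simps)
        then show "(\<Sum>b\<in>G. \<Sum>g\<in>#{#Node b (replicate (ar b) Leaf)#}. ?V (Node a (ts[Suc i:=g]))) = replicate_mset (card G) (Node a ts)"
          by (simp add: single_sum)
      qed
      also have "\<dots> = replicate_mset (card G * m) (Node a ts)"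
        by (simp add: rep_sum mult.commute)
      finally show ?thesis by (simp only: V nf) simp
    next
      case False
      then obtain w where w: "w \<in> set (tl ts)" "w \<noteq> Leaf" by auto
      let ?J = "{1..<?n}"
      have cond: "ts[k:=g] \<noteq> [] \<and> (\<exists>s\<in>set (tl (ts[k:=g])). s \<noteq> Leaf)"
        if k: "k < ?n" and g: "g \<noteq> Leaf" for k g
      proof -
        obtain t0 rest where ts: "ts = t0 # rest" using ne by (cases ts) auto
        show ?thesis
        proof (cases k)
          case 0 then show ?thesis using w by (auto simp: ts)
        next
          case (Suc k') then show ?thesis using k g
            by (auto simp: ts intro!: bexI[OF _ set_update_memI])
        qed
      qed
      define L where "L j k = (\<Sum>g\<in>#?U (ts!k). \<Sum>s\<in>#?V (ts[k:=g]!j). {#ts[k:=g, j:=s]#})" for j k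
      define R where "R j k = (\<Sum>s\<in>#?V (ts!j). \<Sum>g\<in>#?U (ts[j:=s]!k). {#ts[j:=s, k:=g]#})" for j k
      have "(\<Sum>x\<in>#?U (Node a ts). ?V x) = (\<Sum>k<?n. \<Sum>g\<in>#?U (ts!k). image_mset (Node a) (PV (ts[k:=g])))"
        unfolding LHS0
        by (intro sum.cong refl arg_cong[where f=sum_mset] image_mset_cong V_nodeB)
           (auto dest: U_nonleaf cond)
      also have "\<dots> = image_mset (Node a) (\<Sum>k<?n. \<Sum>g\<in>#?U (ts!k). \<Sum>j\<in>?J. \<Sum>s\<in>#?V (ts[k:=g]!j). {#ts[k:=g, j:=s]#})"
        by (simp add: image_mset_of_sum image_mset_of_mb PV_def)
      also have "(\<Sum>k<?n. \<Sum>g\<in>#?U (ts!k). \<Sum>j\<in>?J. \<Sum>s\<in>#?V (ts[k:=g]!j). {#ts[k:=g, j:=s]#})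
          = (\<Sum>j\<in>?J. \<Sum>k<?n. L j k)"
        unfolding L_def mb_sum_swap by (rule sum.swap)
      finally have LHS: "(\<Sum>x\<in>#?U (Node a ts). ?V x) = image_mset (Node a) (\<Sum>j\<in>?J. \<Sum>k<?n. L j k)" .
      have "(\<Sum>x\<in>#?V (Node a ts). ?U x) = (\<Sum>l\<in>#PV ts. image_mset (Node a) (PU G ar l))"
        using ne False by (simp add: V_nodeB mb_image U_node del: Vstar_tree.simps)
      also have "\<dots> = image_mset (Node a) (\<Sum>j\<in>?J. \<Sum>s\<in>#?V (ts!j). \<Sum>k<?n. \<Sum>g\<in>#?U (ts[j:=s]!k). {#ts[j:=s, k:=g]#})"
      proof -
        have "(\<Sum>l\<in>#PV ts. PU G ar l) = (\<Sum>j\<in>?J. \<Sum>s\<in>#?V (ts!j). PU G ar (ts[j:=s]))"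
          unfolding PV_def mb_of_sum mb_single mb_image ..
        also have "\<dots> = (\<Sum>j\<in>?J. \<Sum>s\<in>#?V (ts!j). \<Sum>k<?n. \<Sum>g\<in>#?U (ts[j:=s]!k). {#ts[j:=s, k:=g]#})"
          unfolding PU_def by simp
        finally show ?thesis by (simp add: image_mset_of_mb[symmetric])
      qed
      also have "(\<Sum>j\<in>?J. \<Sum>s\<in>#?V (ts!j). \<Sum>k<?n. \<Sum>g\<in>#?U (ts[j:=s]!k). {#ts[j:=s, k:=g]#})
          = (\<Sum>j\<in>?J. \<Sum>k<?n. R j k)"
        unfolding R_def mb_sum_swap ..
      finally have RHS: "(\<Sum>x\<in>#?V (Node a ts). ?U x) = image_mset (Node a) (\<Sum>j\<in>?J. \<Sum>k<?n. R j k)" .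
      have LR: "L j k = R j k + (if k = j then replicate_mset (card G * nf (ts!j)) ts else {#})"
        if j: "j \<in> ?J" and k: "k < ?n" for j k
      proof (cases "k = j")
        case True
        have "L j k = (\<Sum>g\<in>#?U (ts!j). image_mset (\<lambda>s. ts[j:=s]) (?V g))"
          using True j by (simp add: L_def mb_single)
        also have "\<dots> = image_mset (\<lambda>s. ts[j:=s]) (\<Sum>g\<in>#?U (ts!j). ?V g)"
          by (simp add: image_mset_of_mb)
        also have "\<dots> = image_mset (\<lambda>s. ts[j:=s]) ((\<Sum>x\<in>#?V (ts!j). ?U x) + replicate_mset (card G * nf (ts!j)) (ts!j))"
          using Node.IH[of "ts!j"] j by simp
        also have "\<dots> = R j k + replicate_mset (card G * nf (ts!j)) ts"
          using True j by (simp add: R_def image_mset_of_mb mb_single)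
        finally show ?thesis using True by simp
      next
        case False
        have "L j k = (\<Sum>g\<in>#?U (ts!k). \<Sum>s\<in>#?V (ts!j). {#ts[j:=s, k:=g]#})"
          using False unfolding L_def by (simp add: list_update_swap)
        also have "\<dots> = R j k"
          using False unfolding R_def by (subst sum_mset.swap) simp
        finally show ?thesis using False by simp
      qed
      have "(\<Sum>j\<in>?J. \<Sum>k<?n. L j k) = (\<Sum>j\<in>?J. \<Sum>k<?n. R j k) + (\<Sum>j\<in>?J. replicate_mset (card G * nf (ts!j)) ts)"
        by (simp add: LR sum.distrib)
      also have "(\<Sum>j\<in>?J. replicate_mset (card G * nf (ts!j)) ts) = replicate_mset (card G * nf (Node a ts)) ts"
        using ne by (simp add: rep_sum nf_node sum_distrib_left)
      finally show ?thesis using LHS RHS by simp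
    qed
  qed
qed


lemma count_mb:
  "finite W \<Longrightarrow> set_mset M \<subseteq> W \<Longrightarrow> count (\<Sum>x\<in>#M. f x) s = (\<Sum>u\<in>W. count M u * count (f u) s)"
proof (induction M)
  case empty then show ?case by simp
next
  case (add a M)
  have "(\<Sum>u\<in>W. count (add_mset a M) u * count (f u) s)
      = (\<Sum>u\<in>W. count M u * count (f u) s) + (\<Sum>u\<in>W. if u = a then count (f u) s else 0)"
    by (simp add: sum.distrib[symmetric]) (rule sum.cong, auto)
  also have "(\<Sum>u\<in>W. if u = a then count (f u) s else 0) = count (f a) s"
    using add.prems by (simp add: sum.delta)
  finally show ?case using add by simp
qed

lemma lin_add: "lin (\<lambda>t. f t + g t) v s = lin f v s + lin g v s"
  unfolding lin_def by (simp add: sum.distrib distrib_left)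

lemma lin_comp:
  assumes fin: "finite {t. v t \<noteq> 0}"
  shows "lin f (lin g v) = lin (\<lambda>t. \<Sum>x\<in>#g t. f x) v"
proof
  fix s
  define S where "S = {t. v t \<noteq> 0}"
  define W where "W = (\<Union>t\<in>S. set_mset (g t))"
  define w where "w = lin g v"
  have finW: "finite W" unfolding W_def S_def using fin by auto
  have wu: "w u = (\<Sum>t\<in>S. v t * of_nat (count (g t) u))" for u
    unfolding w_def lin_def S_def ..
  have sub: "{u. w u \<noteq> 0} \<subseteq> W"
  proof
    fix u assume u: "u \<in> {u. w u \<noteq> 0}"
    show "u \<in> W"
    proof (rule ccontr)
      assume "u \<notin> W"
      then have "\<forall>t\<in>S. count (g t) u = 0" unfolding W_def by (auto simp: not_in_iff)
      then have "w u = 0" unfolding wu by simp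
      then show False using u by simp
    qed
  qed
  have "lin f w s = (\<Sum>u\<in>W. w u * of_nat (count (f u) s))"
    unfolding lin_def by (rule sum.mono_neutral_left[OF finW sub]) auto
  also have "\<dots> = (\<Sum>u\<in>W. \<Sum>t\<in>S. v t * of_nat (count (g t) u) * of_nat (count (f u) s))"
    unfolding wu by (simp add: sum_distrib_right)
  also have "\<dots> = (\<Sum>t\<in>S. \<Sum>u\<in>W. v t * of_nat (count (g t) u) * of_nat (count (f u) s))"
    by (rule sum.swap)
  also have "\<dots> = (\<Sum>t\<in>S. v t * of_nat (count (\<Sum>x\<in>#g t. f x) s))"
  proof (rule sum.cong[OF refl])
    fix t assume t: "t \<in> S"
    have "set_mset (g t) \<subseteq> W" using t unfolding W_def by auto
    then show "(\<Sum>u\<in>W. v t * of_nat (count (g t) u) * of_nat (count (f u) s)) = v t * of_nat (count (\<Sum>x\<in>#g t. f x) s)"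
      using finW by (simp add: count_mb sum_distrib_left mult.assoc)
  qed
  finally show "lin f (lin g v) s = lin (\<lambda>t. \<Sum>x\<in>#g t. f x) v s"
    unfolding w_def lin_def S_def .
qed

theorem theorem2p7:
  fixes G :: "'a set" and ar :: "'a \<Rightarrow> nat" and v :: "'a tree \<Rightarrow> 'k::field"
  assumes "finite G"
    and "\<forall>a\<in>G. ar a \<ge> 1"
    and "finite {t. v t \<noteq> 0}"
    and "\<forall>t. v t \<noteq> 0 \<longrightarrow> gtree G ar t"
  shows "lin Vstar_tree (lin (U_tree G ar) v) - lin (U_tree G ar) (lin Vstar_tree v)
           = lin (phi_tree G) v"
proof -
  have eq: "(\<lambda>t. \<Sum>x\<in>#U_tree G ar t. Vstar_tree x) = (\<lambda>t. (\<Sum>x\<in>#Vstar_tree t. U_tree G ar x) + phi_tree G t)"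
    using main[OF assms(1,2)] by (simp add: phi_tree_def)
  have "lin Vstar_tree (lin (U_tree G ar) v) s = lin (U_tree G ar) (lin Vstar_tree v) s + lin (phi_tree G) v s" for s
    unfolding lin_comp[OF assms(3)] eq lin_add ..
  then show ?thesis by (intro ext) simp
qed

end
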